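(* Let $(X,\mu)$ be a measure space and $V$ a complex vector space of measurable complex-valued functions on $X$; for a real-valued measurable weight $\phi$ let $\mathcal H_\phi=\{f\in V:\int_X|f|^2e^{-\phi}d\mu<\infty\}$, assumed to be a Hilbert space with the $L^2(e^{-\phi}d\mu)$ norm on which point evaluations are bounded, with Bergman kernel $K_\phi$. Let $(\phi_t)_{t\in I}$, $I\subset\mathbb R$ an interval, be a family of such weight functions which is differentiable in $t$ at each point of $X$, with derivative $\dot\phi_t$ satisfying $\sup_{t\in I,\,x\in X}|\dot\phi_t(x)|<\infty$. Put $K_t=K_{\phi_t}$. Then $K_t(z,\zeta)$ is differentiable with respect to $t$, and for fixed $z,\zeta\in X$, $$\dot K_t(z,\zeta)=\int_X \dot{\phi_t}(w)\,K_t(z,w)\, K_t(w,\zeta)\, e^{-\phi_t(w)}\, d\mu(w).$$ Moreover, there is a constant $A$ depending only on the sup-norm of $\dot\phi$ such that for all $z\in X$ and all $\tau$ with $|\tau|\leq 1$ (and $t,t+\tau\in I$), $$\left|\frac{K_{t+\tau}(z,z)-K_t(z,z)}{\tau}\right|\leq A\, K_t(z,z).$$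
   Context: The Bergman kernel $K_\phi(z,\zeta)$ of $\mathcal H_\phi$ is the reproducing kernel: $K_\phi(\cdot,\zeta)\in\mathcal H_\phi$ and $f(\zeta)=\int_X f(w)\overline{K_\phi(w,\zeta)}e^{-\phi(w)}d\mu(w)$ for all $f\in\mathcal H_\phi$, with $K_\phi(z,w)=\overline{K_\phi(w,z)}$. $\dot K_t$ and $\dot\phi_t$ denote derivatives with respect to $t$. *)

theory Defs
  imports "HOL-Analysis.Analysis"
begin

definition fun_space :: "'a measure \<Rightarrow> ('a \<Rightarrow> complex) set \<Rightarrow> bool" where
  "fun_space M V \<longleftrightarrow> V \<subseteq> borel_measurable M \<and> (\<lambda>_. 0) \<in> V
     \<and> (\<forall>f\<in>V. \<forall>g\<in>V. (\<lambda>x. f x + g x) \<in> V)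
     \<and> (\<forall>c::complex. \<forall>f\<in>V. (\<lambda>x. c * f x) \<in> V)"

definition Hspace :: "'a measure \<Rightarrow> ('a \<Rightarrow> complex) set \<Rightarrow> ('a \<Rightarrow> real) \<Rightarrow> ('a \<Rightarrow> complex) set" where
  "Hspace M V \<phi> = {f \<in> V. (\<integral>\<^sup>+ w. ennreal ((cmod (f w))\<^sup>2 * exp (- \<phi> w)) \<partial>M) < \<infinity>}"

definition wnorm :: "'a measure \<Rightarrow> ('a \<Rightarrow> real) \<Rightarrow> ('a \<Rightarrow> complex) \<Rightarrow> real" where
  "wnorm M \<phi> f = sqrt (\<integral> w. (cmod (f w))\<^sup>2 * exp (- \<phi> w) \<partial>M)"

definition admissible_weight :: "'a measure \<Rightarrow> ('a \<Rightarrow> complex) set \<Rightarrow> ('a \<Rightarrow> real) \<Rightarrow> bool" where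
  "admissible_weight M V \<phi> \<longleftrightarrow>
     \<phi> \<in> borel_measurable M
     \<and> (\<forall>f\<in>Hspace M V \<phi>. wnorm M \<phi> f = 0 \<longrightarrow> f = (\<lambda>_. 0))
     \<and> (\<forall>F. (\<forall>n. F n \<in> Hspace M V \<phi>) \<longrightarrow>
            (\<forall>e>0. \<exists>N. \<forall>m\<ge>N. \<forall>n\<ge>N. wnorm M \<phi> (\<lambda>x. F m x - F n x) < e) \<longrightarrow>
            (\<exists>f\<in>Hspace M V \<phi>. (\<lambda>n. wnorm M \<phi> (\<lambda>x. F n x - f x)) \<longlonglongrightarrow> 0))
     \<and> (\<forall>z. \<exists>c. \<forall>f\<in>Hspace M V \<phi>. cmod (f z) \<le> c * wnorm M \<phi> f)"

definition bergman_kernel :: "'a measure \<Rightarrow> ('a \<Rightarrow> complex) set \<Rightarrow> ('a \<Rightarrow> real)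
    \<Rightarrow> ('a \<Rightarrow> 'a \<Rightarrow> complex) \<Rightarrow> bool" where
  "bergman_kernel M V \<phi> K \<longleftrightarrow>
     (\<forall>\<zeta>. (\<lambda>z. K z \<zeta>) \<in> Hspace M V \<phi>)
     \<and> (\<forall>f\<in>Hspace M V \<phi>. \<forall>\<zeta>.
          f \<zeta> = (\<integral> w. f w * cnj (K w \<zeta>) * complex_of_real (exp (- \<phi> w)) \<partial>M))
     \<and> (\<forall>z w. K z w = cnj (K w z))"

end

theory Submission
  imports Defs
begin


lemma real_cs_aux:
  fixes X a b :: real
  assumes a: "a \<ge> 0" and b: "b \<ge> 0"
    and H: "\<And>l. l > 0 \<Longrightarrow> X \<le> (l * a + b / l) / 2"
  shows "X \<le> sqrt a * sqrt b"
proof (cases "a > 0 \<and> b > 0")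
  case True
  have "X \<le> ((sqrt b / sqrt a) * a + b / (sqrt b / sqrt a)) / 2"
    using True by (intro H) auto
  also have "\<dots> = sqrt a * sqrt b"
    using True by (simp add: field_simps)
  finally show ?thesis .
next
  case False
  show ?thesis
  proof (rule ccontr)
    assume "\<not> ?thesis"
    with False a b have X: "X > 0" by auto
    show False
    proof (cases "a = 0")
      case True
      have "X \<le> ((2*(b+1)/X) * a + b / (2*(b+1)/X)) / 2" using X b by (intro H) auto
      also have "\<dots> = X * (b / (4*(b+1)))" using True X b by (simp add: field_simps)
      also have "\<dots> < X * 1" using X b by (intro mult_strict_left_mono) (auto simp: field_simps)
      finally show False by simp
    next
      case False2: False
      with False a b have "b = 0" by auto
      have "X \<le> ((X/(2*(a+1))) * a + b / (X/(2*(a+1)))) / 2" using X a by (intro H) auto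
      also have "\<dots> = X * (a / (4*(a+1)))" using \<open>b=0\<close> X a by (simp add: field_simps)
      also have "\<dots> < X * 1" using X a by (intro mult_strict_left_mono) (auto simp: field_simps)
      finally show False by simp
    qed
  qed
qed

lemma CS_integral:
  fixes f g :: "'a \<Rightarrow> real"
  assumes [measurable]: "f \<in> borel_measurable M" "g \<in> borel_measurable M"
    and fi: "integrable M (\<lambda>x. f x ^ 2)" and gi: "integrable M (\<lambda>x. g x ^ 2)"
  shows "integrable M (\<lambda>x. f x * g x)"
    "(\<integral>x. f x * g x \<partial>M) \<le> sqrt (\<integral>x. f x ^ 2 \<partial>M) * sqrt (\<integral>x. g x ^ 2 \<partial>M)"
proof -
  have bnd: "norm (f x * g x) \<le> (f x ^ 2 + g x ^ 2) / 2" for x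
  proof -
    have "0 \<le> (\<bar>f x\<bar> - \<bar>g x\<bar>)^2" by simp
    hence "2 * (\<bar>f x\<bar> * \<bar>g x\<bar>) \<le> \<bar>f x\<bar>^2 + \<bar>g x\<bar>^2" by (simp add: power2_diff)
    thus ?thesis by (simp add: abs_mult)
  qed
  show fg: "integrable M (\<lambda>x. f x * g x)"
    by (rule Bochner_Integration.integrable_bound[where f="\<lambda>x. (f x ^ 2 + g x ^ 2) / 2"])
       (use fi gi bnd in auto)
  show "(\<integral>x. f x * g x \<partial>M) \<le> sqrt (\<integral>x. f x ^ 2 \<partial>M) * sqrt (\<integral>x. g x ^ 2 \<partial>M)"
  proof (rule real_cs_aux)
    show "0 \<le> (\<integral>x. f x ^ 2 \<partial>M)" "0 \<le> (\<integral>x. g x ^ 2 \<partial>M)" by auto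
    fix l :: real assume l: "l > 0"
    have p: "f x * g x \<le> (l * f x ^ 2 + g x ^ 2 / l) / 2" for x
    proof -
      have "0 \<le> (sqrt l * f x - g x / sqrt l) ^ 2" by simp
      also have "\<dots> = (sqrt l)^2 * f x ^ 2 + g x ^ 2 / (sqrt l)^2 - 2 * f x * g x"
        using l by (simp add: power2_diff power_mult_distrib power_divide)
      also have "\<dots> = l * f x ^ 2 + g x ^ 2 / l - 2 * f x * g x"
        using l by simp
      finally show ?thesis by simp
    qed
    have "(\<integral>x. f x * g x \<partial>M) \<le> (\<integral>x. (l * f x ^ 2 + g x ^ 2 / l) / 2 \<partial>M)"
      by (rule integral_mono) (use fg fi gi p in auto)
    also have "\<dots> = (l * (\<integral>x. f x ^ 2 \<partial>M) + (\<integral>x. g x ^ 2 \<partial>M) / l) / 2"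
      using fi gi by simp
    finally show "(\<integral>x. f x * g x \<partial>M) \<le> (l * (\<integral>x. f x ^ 2 \<partial>M) + (\<integral>x. g x ^ 2 \<partial>M) / l) / 2" .
  qed
qed

lemma exp_diff_bound1:
  fixes u v L :: real
  assumes "\<bar>u - v\<bar> \<le> L"
  shows "\<bar>exp (-u) - exp (-v)\<bar> \<le> L * exp L * exp (-u)"
proof -
  have L0: "L \<ge> 0" using assms by linarith
  have LL: "L \<le> L * exp L"
  proof -
    have "L * 1 \<le> L * exp L" using L0 by (intro mult_left_mono) auto
    thus ?thesis by simp
  qed
  show ?thesis
  proof (cases "u \<le> v")
    case True
    have e1: "exp (u - v) \<le> 1" using True by simp
    have eq: "exp (-u) - exp (-v) = exp (-u) * (1 - exp (u - v))"
      by (simp add: algebra_simps flip: exp_add)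
    have "\<bar>exp (-u) - exp (-v)\<bar> = exp (-u) * (1 - exp (u - v))"
      using eq e1 by simp
    also have "\<dots> \<le> exp (-u) * L"
    proof -
      have "v - u \<le> L" using assms True by auto
      hence "1 - exp (u - v) \<le> L" using exp_ge_add_one_self[of "u - v"] by linarith
      thus ?thesis by (intro mult_left_mono) auto
    qed
    also have "\<dots> \<le> exp (-u) * (L * exp L)"
      using LL by (intro mult_left_mono) auto
    finally show ?thesis by (simp add: mult_ac)
  next
    case False
    have e1: "exp (u - v) \<ge> 1" using False by simp
    have eq: "exp (-v) - exp (-u) = exp (-u) * (exp (u - v) - 1)"
      by (simp add: algebra_simps flip: exp_add)
    have b: "exp (u - v) - 1 \<le> (u - v) * exp (u - v)"
    proof -
      have "1 - (u - v) \<le> exp (v - u)" using exp_ge_add_one_self[of "v - u"] by linarith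
      hence "(1 - (u - v)) * exp (u - v) \<le> exp (v - u) * exp (u - v)" by (simp add: mult_right_mono)
      also have "exp (v - u) * exp (u - v) = 1" by (simp flip: exp_add)
      finally show ?thesis by (simp add: algebra_simps)
    qed
    have "\<bar>exp (-u) - exp (-v)\<bar> = exp (-u) * (exp (u - v) - 1)"
      using eq e1 by simp
    also have "\<dots> \<le> exp (-u) * ((u - v) * exp (u - v))"
      using b by (intro mult_left_mono) auto
    also have "\<dots> \<le> exp (-u) * (L * exp L)"
      using assms False L0 by (intro mult_left_mono mult_mono) auto
    finally show ?thesis by (simp add: mult_ac)
  qed
qed

lemma exp_diff_bound2:
  fixes u v L :: real
  assumes "\<bar>u - v\<bar> \<le> L"
  shows "\<bar>exp (-u) - exp (-v)\<bar> \<le> L * exp (L/2) * sqrt (exp (-u) * exp (-v))"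
proof -
  have sq: "sqrt (exp (-u) * exp (-v)) = exp (-(u+v)/2)"
    by (rule real_sqrt_unique) (auto simp: power2_eq_square field_simps simp flip: exp_add)
  have key: "\<bar>exp (-u) - exp (-v)\<bar> \<le> L * exp (L/2) * exp (-(u+v)/2)"
    if "u \<le> v" "\<bar>u - v\<bar> \<le> L" for u v :: real
  proof -
    define d where "d = v - u"
    have d: "0 \<le> d" "d \<le> L" using that by (auto simp: d_def)
    have eq: "exp (-u) - exp (-v) = exp (-(u+v)/2) * (exp (d/2) * (1 - exp (-d)))"
      by (simp add: d_def field_simps flip: exp_add)
    have nn: "0 \<le> 1 - exp (-d)" using d by simp
    have "\<bar>exp (-u) - exp (-v)\<bar> = exp (-(u+v)/2) * (exp (d/2) * (1 - exp (-d)))"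
      using eq nn by simp
    also have "\<dots> \<le> exp (-(u+v)/2) * (exp (L/2) * L)"
      using d nn exp_ge_add_one_self[of "-d"] by (intro mult_left_mono mult_mono) auto
    finally show ?thesis by (simp add: mult_ac)
  qed
  show ?thesis
  proof (cases "u \<le> v")
    case True thus ?thesis using key[OF True assms] sq by simp
  next
    case False
    hence "\<bar>exp (-v) - exp (-u)\<bar> \<le> L * exp (L/2) * exp (-(v+u)/2)"
      using assms by (intro key) auto
    thus ?thesis using sq by (simp add: abs_minus_commute add.commute)
  qed
qed

lemma sqrt_compare:
  fixes a b d :: real
  assumes "a \<ge> 0" "b \<ge> 0" "d \<ge> 0" "\<bar>a - b\<bar> \<le> d * sqrt a * sqrt b"
  shows "\<bar>a - b\<bar> \<le> d * (1 + d) * b"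
proof -
  define x y where "x = sqrt a" "y = sqrt b"
  have xy: "x \<ge> 0" "y \<ge> 0" "a = x^2" "b = y^2" using assms by (auto simp: x_y_def)
  have ab: "\<bar>a - b\<bar> \<le> d * x * y" using assms(4) by (simp add: x_y_def)
  have le: "x \<le> (1 + d) * y"
  proof (rule ccontr)
    assume "\<not> ?thesis"
    hence g: "x > (1 + d) * y" by simp
    have "(1 + d) * y \<ge> 1 * y" using xy assms(3) by (intro mult_right_mono) auto
    hence "x \<ge> y" using g by simp
    have "0 \<le> (1+d)*y" using xy assms(3) by simp
    hence "x > 0" using g by linarith
    have "x * x > x * ((1 + d) * y)" using g \<open>x > 0\<close>
      by (intro mult_strict_left_mono) auto
    moreover have "x * ((1+d)*y) = x * y + d * (x * y)" by (simp add: algebra_simps)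
    moreover have "x * y \<ge> y * y" using \<open>x \<ge> y\<close> xy by (simp add: mult_right_mono)
    moreover have "x*x - y*y \<le> d * (x * y)"
    proof -
      have "x*x - y*y \<le> \<bar>a - b\<bar>" using xy(3,4) by (simp add: power2_eq_square)
      thus ?thesis using ab by (simp add: mult.assoc)
    qed
    ultimately show False by linarith
  qed
  have "\<bar>a - b\<bar> \<le> d * x * y" by (rule ab)
  also have "\<dots> \<le> d * ((1 + d) * y) * y" using le xy assms(3)
    by (intro mult_right_mono mult_left_mono) auto
  also have "\<dots> = d * (1 + d) * b" using xy by (simp add: power2_eq_square)
  finally show ?thesis .
qed



lemma dct_within:
  fixes s :: "real \<Rightarrow> 'a \<Rightarrow> 'b::{banach, second_countable_topology}"
  assumes w: "integrable M w" and fm: "f \<in> borel_measurable M"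
    and sm: "eventually (\<lambda>y. s y \<in> borel_measurable M) (at t within S)"
    and bnd: "eventually (\<lambda>y. AE x in M. norm (s y x) \<le> w x) (at t within S)"
    and lim: "AE x in M. ((\<lambda>y. s y x) \<longlongrightarrow> f x) (at t within S)"
  shows "((\<lambda>y. integral\<^sup>L M (s y)) \<longlongrightarrow> integral\<^sup>L M f) (at t within S)"
  unfolding tendsto_at_iff_sequentially
proof (intro allI impI)
  fix X :: "nat \<Rightarrow> real"
  assume XS: "\<forall>i. X i \<in> S - {t}" and X: "X \<longlonglongrightarrow> t"
  have fX: "filterlim X (at t within S) sequentially"
    using XS X by (auto simp: filterlim_at eventually_sequentially)
  have "eventually (\<lambda>n. s (X n) \<in> borel_measurable M \<and> (AE x in M. norm (s (X n) x) \<le> w x)) sequentially"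
    using filterlim_iff[THEN iffD1, OF fX, rule_format, OF eventually_conj[OF sm bnd]] .
  then obtain N where N: "\<And>n. n \<ge> N \<Longrightarrow> s (X n) \<in> borel_measurable M \<and> (AE x in M. norm (s (X n) x) \<le> w x)"
    by (auto simp: eventually_sequentially)
  show "((\<lambda>y. integral\<^sup>L M (s y)) \<circ> X) \<longlonglongrightarrow> integral\<^sup>L M f"
    unfolding comp_def
  proof (rule LIMSEQ_offset[where k=N], rule integral_dominated_convergence[where w=w])
    show "AE x in M. norm (s (X (n + N)) x) \<le> w x" for n using N[of "n+N"] by auto
    show "s (X (n + N)) \<in> borel_measurable M" for n using N[of "n+N"] by auto
    show "AE x in M. (\<lambda>n. s (X (n + N)) x) \<longlonglongrightarrow> f x"
      using lim
    proof eventually_elim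
      fix x assume "((\<lambda>y. s y x) \<longlongrightarrow> f x) (at t within S)"
      hence "(\<lambda>n. s (X n) x) \<longlonglongrightarrow> f x" by (rule filterlim_compose[OF _ fX])
      thus "(\<lambda>n. s (X (n + N)) x) \<longlonglongrightarrow> f x" by (rule LIMSEQ_ignore_initial_segment)
    qed
  qed (use w fm in auto)
qed

lemma vector_derivative_from_quotient:
  fixes f :: "real \<Rightarrow> complex"
  assumes "((\<lambda>y. (f y - f x) / complex_of_real (y - x)) \<longlongrightarrow> D) (at x within S)"
  shows "(f has_vector_derivative D) (at x within S)"
  unfolding has_vector_derivative_def has_derivative_iff_norm
proof
  show "bounded_linear (\<lambda>h. h *\<^sub>R D)" by (rule bounded_linear_scaleR_left)
  have "((\<lambda>y. (f y - f x) / complex_of_real (y - x) - D) \<longlongrightarrow> 0) (at x within S)"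
    using tendsto_diff[OF assms tendsto_const[of D]] by simp
  hence L: "((\<lambda>y. norm ((f y - f x) / complex_of_real (y - x) - D)) \<longlongrightarrow> 0) (at x within S)"
    by (rule tendsto_norm_zero)
  have ev: "eventually (\<lambda>y. norm ((f y - f x) / complex_of_real (y - x) - D)
      = norm (f y - f x - (y - x) *\<^sub>R D) / norm (y - x)) (at x within S)"
    unfolding eventually_at_filter
  proof (intro always_eventually allI impI)
    fix y assume "y \<noteq> x"
    hence ne: "complex_of_real (y - x) \<noteq> 0" by simp
    have "(f y - f x) / complex_of_real (y - x) - D = (f y - f x - (y - x) *\<^sub>R D) / complex_of_real (y - x)"
      using ne by (simp add: field_simps scaleR_conv_of_real)
    thus "norm ((f y - f x) / complex_of_real (y - x) - D) = norm (f y - f x - (y - x) *\<^sub>R D) / norm (y - x)"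
      by (simp only: norm_divide norm_of_real real_norm_def)
  qed
  show "((\<lambda>y. norm (f y - f x - (y - x) *\<^sub>R D) / norm (y - x)) \<longlongrightarrow> 0) (at x within S)"
    using tendsto_cong[OF ev] L by simp
qed



lemma int_prod:
  fixes f g :: "'a \<Rightarrow> complex" and e h :: "'a \<Rightarrow> real"
  assumes [measurable]: "f \<in> borel_measurable M" "g \<in> borel_measurable M"
    "e \<in> borel_measurable M" "h \<in> borel_measurable M"
    and fi: "integrable M (\<lambda>w. (cmod (f w))\<^sup>2 * e w)"
    and gi: "integrable M (\<lambda>w. (cmod (g w))\<^sup>2 * e w)"
    and e0: "\<And>w. e w \<ge> 0" and c0: "c \<ge> 0" and hb: "\<And>w. \<bar>h w\<bar> \<le> c * e w"
  shows "integrable M (\<lambda>w. f w * g w * complex_of_real (h w))"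
proof (rule Bochner_Integration.integrable_bound[where f="\<lambda>w. c * (((cmod (f w))\<^sup>2 * e w + (cmod (g w))\<^sup>2 * e w) / 2)"])
  show "integrable M (\<lambda>w. c * (((cmod (f w))\<^sup>2 * e w + (cmod (g w))\<^sup>2 * e w) / 2))"
    using fi gi by auto
  show "(\<lambda>w. f w * g w * complex_of_real (h w)) \<in> borel_measurable M" by measurable
  show "AE w in M. norm (f w * g w * complex_of_real (h w))
      \<le> norm (c * (((cmod (f w))\<^sup>2 * e w + (cmod (g w))\<^sup>2 * e w) / 2))"
  proof (rule AE_I2)
    fix w
    have fg: "cmod (f w) * cmod (g w) \<le> ((cmod (f w))\<^sup>2 + (cmod (g w))\<^sup>2) / 2"
    proof -
      have "0 \<le> (cmod (f w) - cmod (g w))^2" by simp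
      thus ?thesis by (simp add: power2_diff)
    qed
    have "norm (f w * g w * complex_of_real (h w)) = cmod (f w) * cmod (g w) * \<bar>h w\<bar>"
      by (simp add: norm_mult)
    also have "\<dots> \<le> (((cmod (f w))\<^sup>2 + (cmod (g w))\<^sup>2) / 2) * (c * e w)"
      using fg hb[of w] by (intro mult_mono) auto
    also have "\<dots> = c * (((cmod (f w))\<^sup>2 * e w + (cmod (g w))\<^sup>2 * e w) / 2)"
      by (simp add: algebra_simps)
    also have "\<dots> \<le> norm (c * (((cmod (f w))\<^sup>2 * e w + (cmod (g w))\<^sup>2 * e w) / 2))"
      by simp
    finally show "norm (f w * g w * complex_of_real (h w))
      \<le> norm (c * (((cmod (f w))\<^sup>2 * e w + (cmod (g w))\<^sup>2 * e w) / 2))" .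
  qed
qed

lemma cnj_measurable[measurable]:
  "f \<in> borel_measurable M \<Longrightarrow> (\<lambda>x. cnj (f x)) \<in> borel_measurable M"
  by (rule borel_measurable_continuous_on[where f=cnj]) (auto intro: continuous_intros)

locale bsetting =
  fixes M :: "'a measure" and V :: "('a \<Rightarrow> complex) set" and I :: "real set"
    and \<phi> :: "real \<Rightarrow> 'a \<Rightarrow> real" and \<phi>' :: "real \<Rightarrow> 'a \<Rightarrow> real"
    and K :: "real \<Rightarrow> 'a \<Rightarrow> 'a \<Rightarrow> complex" and C :: real
  assumes fs: "fun_space M V" and iv: "is_interval I"
    and adm: "\<And>t. t \<in> I \<Longrightarrow> admissible_weight M V (\<phi> t)"
    and der: "\<And>t x. t \<in> I \<Longrightarrow> ((\<lambda>s. \<phi> s x) has_real_derivative \<phi>' t x) (at t within I)"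
    and bnd: "\<And>t x. t \<in> I \<Longrightarrow> \<bar>\<phi>' t x\<bar> \<le> C"
    and bk: "\<And>t. t \<in> I \<Longrightarrow> bergman_kernel M V (\<phi> t) (K t)"
begin

lemma C0: "t \<in> I \<Longrightarrow> 0 \<le> C"
  using bnd[of t undefined] by linarith

lemma Vmeas: "f \<in> V \<Longrightarrow> f \<in> borel_measurable M"
  using fs by (auto simp: fun_space_def)

lemma phimeas: "t \<in> I \<Longrightarrow> \<phi> t \<in> borel_measurable M"
  using adm by (auto simp: admissible_weight_def)

lemma emeas: "t \<in> I \<Longrightarrow> (\<lambda>w. exp (- \<phi> t w)) \<in> borel_measurable M"
  using phimeas[of t] by measurable

lemma lip: "s \<in> I \<Longrightarrow> t \<in> I \<Longrightarrow> \<bar>\<phi> s x - \<phi> t x\<bar> \<le> C * \<bar>s - t\<bar>"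
  using field_differentiable_bound[of I "\<lambda>s. \<phi> s x" "\<lambda>t. \<phi>' t x" C s t]
    is_interval_convex[OF iv] der bnd by auto

lemma wcomp: "s \<in> I \<Longrightarrow> t \<in> I \<Longrightarrow> exp (- \<phi> t w) \<le> exp (C * \<bar>s - t\<bar>) * exp (- \<phi> s w)"
proof -
  assume s: "s \<in> I" and t: "t \<in> I"
  have "- \<phi> t w \<le> C * \<bar>s - t\<bar> + - \<phi> s w" using lip[OF s t, of w] by linarith
  hence "exp (- \<phi> t w) \<le> exp (C * \<bar>s - t\<bar> + - \<phi> s w)" by (subst exp_le_cancel_iff)
  also have "\<dots> = exp (C * \<bar>s - t\<bar>) * exp (- \<phi> s w)" by (rule exp_add)
  finally show ?thesis .
qed

lemma Hchar: "t \<in> I \<Longrightarrow> f \<in> Hspace M V (\<phi> t) \<longleftrightarrow> f \<in> V \<and> integrable M (\<lambda>w. (cmod (f w))\<^sup>2 * exp (- \<phi> t w))"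
proof -
  assume t: "t \<in> I"
  note [measurable] = phimeas[OF t]
  show ?thesis
  proof (cases "f \<in> V")
    case True
    note [measurable] = Vmeas[OF True]
    have "integrable M (\<lambda>w. (cmod (f w))\<^sup>2 * exp (- \<phi> t w)) \<longleftrightarrow>
        (\<integral>\<^sup>+ w. ennreal ((cmod (f w))\<^sup>2 * exp (- \<phi> t w)) \<partial>M) < \<infinity>"
      unfolding integrable_iff_bounded by auto
    thus ?thesis using True by (simp add: Hspace_def)
  qed (simp add: Hspace_def)
qed

lemma Hsame: "s \<in> I \<Longrightarrow> t \<in> I \<Longrightarrow> f \<in> Hspace M V (\<phi> s) \<Longrightarrow> f \<in> Hspace M V (\<phi> t)"
proof -
  assume s: "s \<in> I" and t: "t \<in> I" and f: "f \<in> Hspace M V (\<phi> s)"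
  note [measurable] = phimeas[OF t] phimeas[OF s]
  from f s have fV: "f \<in> V" and fi: "integrable M (\<lambda>w. (cmod (f w))\<^sup>2 * exp (- \<phi> s w))"
    by (auto simp: Hchar)
  note [measurable] = Vmeas[OF fV]
  have "integrable M (\<lambda>w. (cmod (f w))\<^sup>2 * exp (- \<phi> t w))"
  proof (rule Bochner_Integration.integrable_bound[where f="\<lambda>w. exp (C * \<bar>s - t\<bar>) * ((cmod (f w))\<^sup>2 * exp (- \<phi> s w))"])
    show "integrable M (\<lambda>w. exp (C * \<bar>s - t\<bar>) * ((cmod (f w))\<^sup>2 * exp (- \<phi> s w)))"
      using fi by auto
    show "AE w in M. norm ((cmod (f w))\<^sup>2 * exp (- \<phi> t w)) \<le> norm (exp (C * \<bar>s - t\<bar>) * ((cmod (f w))\<^sup>2 * exp (- \<phi> s w)))"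
    proof (rule AE_I2)
      fix w
      have "(cmod (f w))\<^sup>2 * exp (- \<phi> t w) \<le> (cmod (f w))\<^sup>2 * (exp (C * \<bar>s - t\<bar>) * exp (- \<phi> s w))"
        using wcomp[OF s t, of w] by (intro mult_left_mono) auto
      thus "norm ((cmod (f w))\<^sup>2 * exp (- \<phi> t w)) \<le> norm (exp (C * \<bar>s - t\<bar>) * ((cmod (f w))\<^sup>2 * exp (- \<phi> s w)))"
        by (simp add: mult_ac)
    qed
  qed measurable
  thus ?thesis using fV t by (simp add: Hchar)
qed

lemma bk1: "s \<in> I \<Longrightarrow> (\<lambda>w. K s w \<zeta>) \<in> Hspace M V (\<phi> s)"
  using bk[of s] unfolding bergman_kernel_def by blast

lemma Kin: "s \<in> I \<Longrightarrow> t \<in> I \<Longrightarrow> (\<lambda>w. K s w \<zeta>) \<in> Hspace M V (\<phi> t)"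
  using bk1[of s] Hsame[of s t] by blast

lemma KV: "s \<in> I \<Longrightarrow> (\<lambda>w. K s w \<zeta>) \<in> V"
  using Kin[of s s] Hchar[of s] by auto

lemma Kmeas1: "s \<in> I \<Longrightarrow> (\<lambda>w. K s w \<zeta>) \<in> borel_measurable M"
  using KV Vmeas by blast

lemma Ksym: "t \<in> I \<Longrightarrow> K t z w = cnj (K t w z)"
  using bk[of t] unfolding bergman_kernel_def by blast

lemma Kmeas2: "s \<in> I \<Longrightarrow> (\<lambda>w. K s z w) \<in> borel_measurable M"
proof -
  assume s: "s \<in> I"
  note [measurable] = Kmeas1[OF s, of z]
  have "(\<lambda>w. cnj (K s w z)) \<in> borel_measurable M" by measurable
  moreover have "(\<lambda>w. K s z w) = (\<lambda>w. cnj (K s w z))" by (rule ext) (rule Ksym[OF s])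
  ultimately show ?thesis by simp
qed

lemma Kint: "s \<in> I \<Longrightarrow> t \<in> I \<Longrightarrow> integrable M (\<lambda>w. (cmod (K s w \<zeta>))\<^sup>2 * exp (- \<phi> t w))"
  using Kin[of s t \<zeta>] Hchar[of t] by auto

lemma Kint2: "s \<in> I \<Longrightarrow> t \<in> I \<Longrightarrow> integrable M (\<lambda>w. (cmod (K s z w))\<^sup>2 * exp (- \<phi> t w))"
proof -
  assume s: "s \<in> I" and t: "t \<in> I"
  have "(\<lambda>w. (cmod (K s z w))\<^sup>2 * exp (- \<phi> t w)) = (\<lambda>w. (cmod (K s w z))\<^sup>2 * exp (- \<phi> t w))"
    by (rule ext) (simp add: Ksym[OF s, of z])
  thus ?thesis using Kint[OF s t, of z] by simp
qed

lemma repro: "t \<in> I \<Longrightarrow> f \<in> Hspace M V (\<phi> t) \<Longrightarrow>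
    f \<zeta> = (\<integral> w. f w * cnj (K t w \<zeta>) * complex_of_real (exp (- \<phi> t w)) \<partial>M)"
  using bk[of t] unfolding bergman_kernel_def by blast

definition N :: "real \<Rightarrow> 'a \<Rightarrow> real" where
  "N t z = (\<integral> w. (cmod (K t w z))\<^sup>2 * exp (- \<phi> t w) \<partial>M)"

lemma N0: "N t z \<ge> 0"
  unfolding N_def by (rule integral_nonneg_AE) auto

lemma diag: "t \<in> I \<Longrightarrow> K t z z = complex_of_real (N t z)"
proof -
  assume t: "t \<in> I"
  have "K t z z = (\<integral> w. K t w z * cnj (K t w z) * complex_of_real (exp (- \<phi> t w)) \<partial>M)"
    using repro[OF t Kin[OF t t, of z], of z] .
  also have "\<dots> = (\<integral> w. complex_of_real ((cmod (K t w z))\<^sup>2 * exp (- \<phi> t w)) \<partial>M)"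
    by (rule Bochner_Integration.integral_cong) (auto simp: complex_mult_cnj cmod_power2)
  also have "\<dots> = complex_of_real (N t z)" unfolding N_def by (rule integral_complex_of_real)
  finally show ?thesis .
qed

end



context bsetting begin

lemma Ndiff:
  assumes s: "s \<in> I" and t: "t \<in> I"
  shows "K s z \<zeta> - K t z \<zeta> = (\<integral> w. K s w \<zeta> * K t z w * complex_of_real (exp (- \<phi> t w) - exp (- \<phi> s w)) \<partial>M)"
proof -
  note [measurable] = Kmeas1[OF s, of \<zeta>] Kmeas2[OF t, of z] emeas[OF s] emeas[OF t]
  have R1: "K s z \<zeta> = (\<integral> w. K s w \<zeta> * K t z w * complex_of_real (exp (- \<phi> t w)) \<partial>M)"
  proof -
    have "K s z \<zeta> = (\<integral> w. K s w \<zeta> * cnj (K t w z) * complex_of_real (exp (- \<phi> t w)) \<partial>M)"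
      by (rule repro[OF t Kin[OF s t]])
    also have "\<dots> = (\<integral> w. K s w \<zeta> * K t z w * complex_of_real (exp (- \<phi> t w)) \<partial>M)"
      by (rule Bochner_Integration.integral_cong) (simp_all add: Ksym[OF t, of z])
    finally show ?thesis .
  qed
  have R2: "K t z \<zeta> = (\<integral> w. K s w \<zeta> * K t z w * complex_of_real (exp (- \<phi> s w)) \<partial>M)"
  proof -
    have "K t \<zeta> z = (\<integral> w. K t w z * cnj (K s w \<zeta>) * complex_of_real (exp (- \<phi> s w)) \<partial>M)"
      by (rule repro[OF s Kin[OF t s]])
    hence "K t z \<zeta> = cnj (\<integral> w. K t w z * cnj (K s w \<zeta>) * complex_of_real (exp (- \<phi> s w)) \<partial>M)"
      using Ksym[OF t, of z \<zeta>] by simp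
    also have "\<dots> = (\<integral> w. cnj (K t w z * cnj (K s w \<zeta>) * complex_of_real (exp (- \<phi> s w))) \<partial>M)"
      by (rule Bochner_Integration.integral_cnj[symmetric])
    also have "\<dots> = (\<integral> w. K s w \<zeta> * K t z w * complex_of_real (exp (- \<phi> s w)) \<partial>M)"
      by (rule Bochner_Integration.integral_cong) (simp_all add: Ksym[OF t, of z] mult_ac)
    finally show ?thesis .
  qed
  have i1: "integrable M (\<lambda>w. K s w \<zeta> * K t z w * complex_of_real (exp (- \<phi> t w)))"
    by (rule int_prod[where e="\<lambda>w. exp (- \<phi> t w)" and c=1]) (use Kint[OF s t] Kint2[OF t t] in auto)
  have i2: "integrable M (\<lambda>w. K s w \<zeta> * K t z w * complex_of_real (exp (- \<phi> s w)))"
    by (rule int_prod[where e="\<lambda>w. exp (- \<phi> s w)" and c=1]) (use Kint[OF s s] Kint2[OF t s] in auto)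
  have "K s z \<zeta> - K t z \<zeta> = (\<integral> w. K s w \<zeta> * K t z w * complex_of_real (exp (- \<phi> t w)) - K s w \<zeta> * K t z w * complex_of_real (exp (- \<phi> s w)) \<partial>M)"
    using R1 R2 Bochner_Integration.integral_diff[OF i1 i2] by simp
  also have "\<dots> = (\<integral> w. K s w \<zeta> * K t z w * complex_of_real (exp (- \<phi> t w) - exp (- \<phi> s w)) \<partial>M)"
    by (rule Bochner_Integration.integral_cong) (simp_all add: algebra_simps)
  finally show ?thesis .
qed

lemma Fint:
  assumes s: "s \<in> I" and t: "t \<in> I"
  shows "integrable M (\<lambda>w. K s w \<zeta> * K t z w * complex_of_real (exp (- \<phi> t w) - exp (- \<phi> s w)))"
proof -
  note [measurable] = Kmeas1[OF s, of \<zeta>] Kmeas2[OF t, of z] emeas[OF s] emeas[OF t]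
  have C0': "C \<ge> 0" using C0[OF t] .
  show ?thesis
  proof (rule int_prod[where e="\<lambda>w. exp (- \<phi> t w)" and c="C * \<bar>s - t\<bar> * exp (C * \<bar>s - t\<bar>)"])
    show "integrable M (\<lambda>w. (cmod (K s w \<zeta>))\<^sup>2 * exp (- \<phi> t w))" by (rule Kint[OF s t])
    show "integrable M (\<lambda>w. (cmod (K t z w))\<^sup>2 * exp (- \<phi> t w))" by (rule Kint2[OF t t])
    show "0 \<le> C * \<bar>s - t\<bar> * exp (C * \<bar>s - t\<bar>)" using C0' by simp
    fix w
    have "\<bar>\<phi> t w - \<phi> s w\<bar> \<le> C * \<bar>s - t\<bar>" using lip[OF t s, of w] by (simp add: abs_minus_commute)
    thus "\<bar>exp (- \<phi> t w) - exp (- \<phi> s w)\<bar> \<le> C * \<bar>s - t\<bar> * exp (C * \<bar>s - t\<bar>) * exp (- \<phi> t w)"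
      by (rule exp_diff_bound1)
  qed auto
qed

lemma Kbound:
  assumes s: "s \<in> I" and t: "t \<in> I"
  shows "cmod (K s z \<zeta> - K t z \<zeta>) \<le> (C * \<bar>s - t\<bar>) * exp (C * \<bar>s - t\<bar> / 2) * sqrt (N s \<zeta>) * sqrt (N t z)"
proof -
  note [measurable] = Kmeas1[OF s, of \<zeta>] Kmeas1[OF t, of z] Kmeas2[OF t, of z] emeas[OF s] emeas[OF t]
  define L where "L = C * \<bar>s - t\<bar>"
  have L0: "L \<ge> 0" using C0[OF t] by (simp add: L_def)
  define F where "F = (\<lambda>w. K s w \<zeta> * K t z w * complex_of_real (exp (- \<phi> t w) - exp (- \<phi> s w)))"
  define a where "a = (\<lambda>w. cmod (K s w \<zeta>) * sqrt (exp (- \<phi> s w)))"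
  define b where "b = (\<lambda>w. cmod (K t w z) * sqrt (exp (- \<phi> t w)))"
  have [measurable]: "a \<in> borel_measurable M" "b \<in> borel_measurable M" unfolding a_def b_def by measurable
  have a2: "(\<lambda>w. a w ^ 2) = (\<lambda>w. (cmod (K s w \<zeta>))\<^sup>2 * exp (- \<phi> s w))"
    by (rule ext) (simp add: a_def power_mult_distrib)
  have b2: "(\<lambda>w. b w ^ 2) = (\<lambda>w. (cmod (K t w z))\<^sup>2 * exp (- \<phi> t w))"
    by (rule ext) (simp add: b_def power_mult_distrib)
  have ai: "integrable M (\<lambda>w. a w ^ 2)" unfolding a2 by (rule Kint[OF s s])
  have bi: "integrable M (\<lambda>w. b w ^ 2)" unfolding b2 by (rule Kint[OF t t])
  note CS = CS_integral[of a M b, OF _ _ ai bi]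
  have Fi: "integrable M F" unfolding F_def by (rule Fint[OF s t])
  have pt: "cmod (F w) \<le> L * exp (L / 2) * (a w * b w)" for w
  proof -
    have "\<bar>\<phi> t w - \<phi> s w\<bar> \<le> L" using lip[OF t s, of w] by (simp add: abs_minus_commute L_def)
    hence e: "\<bar>exp (- \<phi> t w) - exp (- \<phi> s w)\<bar> \<le> L * exp (L/2) * sqrt (exp (- \<phi> t w) * exp (- \<phi> s w))"
      by (rule exp_diff_bound2)
    have "cmod (F w) = cmod (K s w \<zeta>) * cmod (K t w z) * \<bar>exp (- \<phi> t w) - exp (- \<phi> s w)\<bar>"
      by (simp add: F_def norm_mult Ksym[OF t, of z w] del: of_real_diff)
    also have "\<dots> \<le> cmod (K s w \<zeta>) * cmod (K t w z) * (L * exp (L/2) * sqrt (exp (- \<phi> t w) * exp (- \<phi> s w)))"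
      using e by (intro mult_left_mono) auto
    also have "\<dots> = L * exp (L / 2) * (a w * b w)"
      by (simp add: a_def b_def real_sqrt_mult mult_ac)
    finally show ?thesis .
  qed
  have "cmod (K s z \<zeta> - K t z \<zeta>) = cmod (integral\<^sup>L M F)"
    using Ndiff[OF s t] by (simp add: F_def)
  also have "\<dots> \<le> (\<integral> w. cmod (F w) \<partial>M)" by (rule integral_norm_bound)
  also have "\<dots> \<le> (\<integral> w. L * exp (L / 2) * (a w * b w) \<partial>M)"
    by (rule integral_mono) (use Fi CS(1) pt in auto)
  also have "\<dots> = L * exp (L / 2) * (\<integral> w. a w * b w \<partial>M)" by simp
  also have "\<dots> \<le> L * exp (L / 2) * (sqrt (\<integral> w. a w ^ 2 \<partial>M) * sqrt (\<integral> w. b w ^ 2 \<partial>M))"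
    using CS(2) L0 by (intro mult_left_mono) auto
  also have "\<dots> = L * exp (L / 2) * sqrt (N s \<zeta>) * sqrt (N t z)"
    unfolding a2 b2 N_def by simp
  finally show ?thesis by (simp add: L_def)
qed

lemma claim2:
  assumes t: "t \<in> I" and st: "t + \<tau> \<in> I" and tau: "\<bar>\<tau>\<bar> \<le> 1"
  shows "cmod ((K (t + \<tau>) z z - K t z z) / complex_of_real \<tau>)
     \<le> (C * exp (C / 2) * (1 + C * exp (C / 2))) * cmod (K t z z)"
proof -
  define s where "s = t + \<tau>"
  have s: "s \<in> I" using st by (simp add: s_def)
  have C0': "C \<ge> 0" using C0[OF t] .
  define c where "c = C * exp (C / 2)"
  have c0: "c \<ge> 0" using C0' by (simp add: c_def)
  have b0: "N t z \<ge> 0" by (rule N0)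
  have ktz: "cmod (K t z z) = N t z" using diag[OF t, of z] b0 by simp
  show ?thesis
  proof (cases "\<tau> = 0")
    case True
    thus ?thesis using c0 b0 ktz by (simp add: c_def[symmetric])
  next
    case False
    define d where "d = C * \<bar>\<tau>\<bar> * exp (C * \<bar>\<tau>\<bar> / 2)"
    have d0: "d \<ge> 0" using C0' by (simp add: d_def)
    have "C * \<bar>\<tau>\<bar> \<le> C * 1" using C0' tau by (intro mult_left_mono) auto
    hence ex: "exp (C * \<bar>\<tau>\<bar> / 2) \<le> exp (C / 2)" by simp
    have dle: "d \<le> c * \<bar>\<tau>\<bar>"
    proof -
      have "d = (C * \<bar>\<tau>\<bar>) * exp (C * \<bar>\<tau>\<bar> / 2)" by (simp add: d_def)
      also have "\<dots> \<le> (C * \<bar>\<tau>\<bar>) * exp (C / 2)" using ex C0' by (intro mult_left_mono) auto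
      finally show ?thesis by (simp add: c_def mult_ac)
    qed
    have dle1: "d \<le> c" using dle c0 tau
      by (metis mult.right_neutral mult_left_mono order_trans)
    have diff: "cmod (K s z z - K t z z) = \<bar>N s z - N t z\<bar>"
      using diag[OF s, of z] diag[OF t, of z] by (simp flip: of_real_diff)
    have "\<bar>N s z - N t z\<bar> \<le> d * sqrt (N s z) * sqrt (N t z)"
      using Kbound[OF s t, of z z] diff by (simp add: d_def s_def)
    hence "\<bar>N s z - N t z\<bar> \<le> d * (1 + d) * N t z"
      by (intro sqrt_compare N0 d0)
    also have "\<dots> \<le> (c * \<bar>\<tau>\<bar>) * (1 + c) * N t z"
      using dle dle1 d0 b0 c0 by (intro mult_right_mono mult_mono) auto
    finally have main: "\<bar>N s z - N t z\<bar> \<le> (c * \<bar>\<tau>\<bar>) * (1 + c) * N t z" .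
    have "cmod ((K (t + \<tau>) z z - K t z z) / complex_of_real \<tau>) = \<bar>N s z - N t z\<bar> / \<bar>\<tau>\<bar>"
      using diff by (simp add: s_def norm_divide)
    also have "\<dots> \<le> (c * \<bar>\<tau>\<bar>) * (1 + c) * N t z / \<bar>\<tau>\<bar>"
      using main by (intro divide_right_mono) auto
    also have "\<dots> = c * (1 + c) * N t z" using False by (simp add: field_simps)
    finally show ?thesis using ktz by (simp add: c_def)
  qed
qed

end



context bsetting begin

lemma ev_near: "t \<in> I \<Longrightarrow> eventually (\<lambda>s. s \<in> I \<and> s \<noteq> t \<and> \<bar>s - t\<bar> \<le> 1) (at t within I)"
  unfolding eventually_at by (rule exI[of _ 1]) (auto simp: dist_real_def)

lemma Ncont:
  assumes t: "t \<in> I"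
  shows "((\<lambda>s. N s \<zeta>) \<longlongrightarrow> N t \<zeta>) (at t within I)"
proof -
  define A where "A = C * exp (C / 2) * (1 + C * exp (C / 2))"
  have "((\<lambda>s. N s \<zeta> - N t \<zeta>) \<longlongrightarrow> 0) (at t within I)"
  proof (rule Lim_null_comparison)
    show "eventually (\<lambda>s. norm (N s \<zeta> - N t \<zeta>) \<le> A * \<bar>s - t\<bar> * N t \<zeta>) (at t within I)"
      using ev_near[OF t]
    proof eventually_elim
      case (elim s)
      hence s: "s \<in> I" and ne: "s \<noteq> t" and le: "\<bar>s - t\<bar> \<le> 1" by auto
      have "cmod ((K (t + (s - t)) \<zeta> \<zeta> - K t \<zeta> \<zeta>) / complex_of_real (s - t)) \<le> A * cmod (K t \<zeta> \<zeta>)"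
        unfolding A_def by (rule claim2) (use t s le in auto)
      hence "\<bar>N s \<zeta> - N t \<zeta>\<bar> / \<bar>s - t\<bar> \<le> A * N t \<zeta>"
        using diag[OF s, of \<zeta>] diag[OF t, of \<zeta>] N0[of t \<zeta>]
        by (simp add: norm_divide flip: of_real_diff)
      hence "\<bar>N s \<zeta> - N t \<zeta>\<bar> \<le> A * N t \<zeta> * \<bar>s - t\<bar>"
        using ne by (simp add: divide_le_eq)
      thus ?case by (simp add: mult_ac)
    qed
    have "((\<lambda>s. A * \<bar>s - t\<bar> * N t \<zeta>) \<longlongrightarrow> A * \<bar>t - t\<bar> * N t \<zeta>) (at t within I)"
      by (intro tendsto_intros)
    thus "((\<lambda>s. A * \<bar>s - t\<bar> * N t \<zeta>) \<longlongrightarrow> 0) (at t within I)" by simp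
  qed
  thus ?thesis by (rule LIM_zero_cancel)
qed

lemma Eint:
  assumes s: "s \<in> I" and t: "t \<in> I" and u: "u \<in> I"
  shows "integrable M (\<lambda>w. (cmod (K s w \<zeta> - K t w \<zeta>))\<^sup>2 * exp (- \<phi> u w))"
proof (rule Bochner_Integration.integrable_bound[where f="\<lambda>w. 2 * ((cmod (K s w \<zeta>))\<^sup>2 * exp (- \<phi> u w)) + 2 * ((cmod (K t w \<zeta>))\<^sup>2 * exp (- \<phi> u w))"])
  note [measurable] = Kmeas1[OF s, of \<zeta>] Kmeas1[OF t, of \<zeta>] emeas[OF u]
  show "integrable M (\<lambda>w. 2 * ((cmod (K s w \<zeta>))\<^sup>2 * exp (- \<phi> u w)) + 2 * ((cmod (K t w \<zeta>))\<^sup>2 * exp (- \<phi> u w)))"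
    using Kint[OF s u, of \<zeta>] Kint[OF t u, of \<zeta>] by auto
  show "(\<lambda>w. (cmod (K s w \<zeta> - K t w \<zeta>))\<^sup>2 * exp (- \<phi> u w)) \<in> borel_measurable M" by measurable
  show "AE w in M. norm ((cmod (K s w \<zeta> - K t w \<zeta>))\<^sup>2 * exp (- \<phi> u w)) \<le>
      norm (2 * ((cmod (K s w \<zeta>))\<^sup>2 * exp (- \<phi> u w)) + 2 * ((cmod (K t w \<zeta>))\<^sup>2 * exp (- \<phi> u w)))"
  proof (rule AE_I2)
    fix w
    define a b where "a = cmod (K s w \<zeta>)" "b = cmod (K t w \<zeta>)"
    have "cmod (K s w \<zeta> - K t w \<zeta>) \<le> a + b" unfolding a_b_def by (rule norm_triangle_ineq4)
    hence "(cmod (K s w \<zeta> - K t w \<zeta>))\<^sup>2 \<le> (a + b)\<^sup>2" by (intro power_mono) auto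
    also have "\<dots> \<le> 2 * a\<^sup>2 + 2 * b\<^sup>2"
    proof -
      have "0 \<le> (a - b)\<^sup>2" by simp
      thus ?thesis by (simp add: power2_sum power2_diff)
    qed
    finally have "(cmod (K s w \<zeta> - K t w \<zeta>))\<^sup>2 * exp (- \<phi> u w) \<le> (2 * a\<^sup>2 + 2 * b\<^sup>2) * exp (- \<phi> u w)"
      by (intro mult_right_mono) auto
    thus "norm ((cmod (K s w \<zeta> - K t w \<zeta>))\<^sup>2 * exp (- \<phi> u w)) \<le>
      norm (2 * ((cmod (K s w \<zeta>))\<^sup>2 * exp (- \<phi> u w)) + 2 * ((cmod (K t w \<zeta>))\<^sup>2 * exp (- \<phi> u w)))"
      by (simp add: a_b_def algebra_simps)
  qed
qed

definition E :: "real \<Rightarrow> real \<Rightarrow> 'a \<Rightarrow> real" where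
  "E t s \<zeta> = (\<integral> w. (cmod (K s w \<zeta> - K t w \<zeta>))\<^sup>2 * exp (- \<phi> t w) \<partial>M)"

lemma Eeq:
  assumes s: "s \<in> I" and t: "t \<in> I"
  shows "E t s \<zeta> = (\<integral> w. (cmod (K s w \<zeta>))\<^sup>2 * exp (- \<phi> t w) \<partial>M) + N t \<zeta> - 2 * N s \<zeta>"
proof -
  note [measurable] = Kmeas1[OF s, of \<zeta>] Kmeas1[OF t, of \<zeta>] emeas[OF t]
  define J where "J = (\<lambda>w. K s w \<zeta> * cnj (K t w \<zeta>) * complex_of_real (exp (- \<phi> t w)))"
  have Ji: "integrable M J" unfolding J_def
    by (rule int_prod[where e="\<lambda>w. exp (- \<phi> t w)" and c=1]) (use Kint[OF s t] Kint[OF t t] in auto)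
  have ReJ: "(\<integral> w. Re (J w) \<partial>M) = N s \<zeta>"
  proof -
    have "(\<integral> w. Re (J w) \<partial>M) = Re (integral\<^sup>L M J)"
      by (rule integral_bounded_linear[OF bounded_linear_Re Ji])
    also have "integral\<^sup>L M J = K s \<zeta> \<zeta>"
      unfolding J_def by (rule repro[OF t Kin[OF s t], symmetric])
    finally show ?thesis using diag[OF s, of \<zeta>] by simp
  qed
  have ReJi: "integrable M (\<lambda>w. Re (J w))" by (rule integrable_bounded_linear[OF bounded_linear_Re Ji])
  have pt: "(cmod (K s w \<zeta> - K t w \<zeta>))\<^sup>2 * exp (- \<phi> t w) =
      (cmod (K s w \<zeta>))\<^sup>2 * exp (- \<phi> t w) + (cmod (K t w \<zeta>))\<^sup>2 * exp (- \<phi> t w) - 2 * Re (J w)" for w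
  proof -
    have X: "(cmod (K s w \<zeta> - K t w \<zeta>))\<^sup>2 = (cmod (K s w \<zeta>))\<^sup>2 + (cmod (K t w \<zeta>))\<^sup>2 - 2 * Re (K s w \<zeta> * cnj (K t w \<zeta>))"
      by (simp add: cmod_power2 power2_diff algebra_simps)
    have r: "Re (J w) = Re (K s w \<zeta> * cnj (K t w \<zeta>)) * exp (- \<phi> t w)" by (simp add: J_def)
    have "(cmod (K s w \<zeta> - K t w \<zeta>))\<^sup>2 * exp (- \<phi> t w) = ((cmod (K s w \<zeta>))\<^sup>2 + (cmod (K t w \<zeta>))\<^sup>2 - 2 * Re (K s w \<zeta> * cnj (K t w \<zeta>))) * exp (- \<phi> t w)"
      by (subst X) (rule refl)
    thus ?thesis unfolding r by (simp only: left_diff_distrib distrib_right mult.assoc)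
  qed
  have "E t s \<zeta> = (\<integral> w. (cmod (K s w \<zeta>))\<^sup>2 * exp (- \<phi> t w) + (cmod (K t w \<zeta>))\<^sup>2 * exp (- \<phi> t w) - 2 * Re (J w) \<partial>M)"
    unfolding E_def pt ..
  also have "\<dots> = (\<integral> w. (cmod (K s w \<zeta>))\<^sup>2 * exp (- \<phi> t w) \<partial>M) + (\<integral> w. (cmod (K t w \<zeta>))\<^sup>2 * exp (- \<phi> t w) \<partial>M) - 2 * (\<integral> w. Re (J w) \<partial>M)"
    using Kint[OF s t, of \<zeta>] Kint[OF t t, of \<zeta>] ReJi by simp
  finally show ?thesis using ReJ by (simp add: N_def)
qed

lemma Econv:
  assumes t: "t \<in> I"
  shows "((\<lambda>s. E t s \<zeta>) \<longlongrightarrow> 0) (at t within I)"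
proof (rule Lim_null_comparison)
  show "eventually (\<lambda>s. norm (E t s \<zeta>) \<le> exp (C * \<bar>s - t\<bar>) * N s \<zeta> + N t \<zeta> - 2 * N s \<zeta>) (at t within I)"
    using ev_near[OF t]
  proof eventually_elim
    case (elim s)
    hence s: "s \<in> I" by auto
    note [measurable] = Kmeas1[OF s, of \<zeta>] Kmeas1[OF t, of \<zeta>] emeas[OF t] emeas[OF s]
    have E0: "E t s \<zeta> \<ge> 0" unfolding E_def by (rule integral_nonneg_AE) auto
    have "(\<integral> w. (cmod (K s w \<zeta>))\<^sup>2 * exp (- \<phi> t w) \<partial>M) \<le> (\<integral> w. exp (C * \<bar>s - t\<bar>) * ((cmod (K s w \<zeta>))\<^sup>2 * exp (- \<phi> s w)) \<partial>M)"
    proof (rule integral_mono)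
      show "integrable M (\<lambda>w. (cmod (K s w \<zeta>))\<^sup>2 * exp (- \<phi> t w))" by (rule Kint[OF s t])
      show "integrable M (\<lambda>w. exp (C * \<bar>s - t\<bar>) * ((cmod (K s w \<zeta>))\<^sup>2 * exp (- \<phi> s w)))"
        using Kint[OF s s, of \<zeta>] by auto
      fix w
      show "(cmod (K s w \<zeta>))\<^sup>2 * exp (- \<phi> t w) \<le> exp (C * \<bar>s - t\<bar>) * ((cmod (K s w \<zeta>))\<^sup>2 * exp (- \<phi> s w))"
        using wcomp[OF s t, of w] mult_left_mono[OF wcomp[OF s t, of w], of "(cmod (K s w \<zeta>))\<^sup>2"]
        by (simp add: mult_ac)
    qed
    also have "\<dots> = exp (C * \<bar>s - t\<bar>) * N s \<zeta>" by (simp add: N_def)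
    finally show ?case using Eeq[OF s t, of \<zeta>] E0 by simp
  qed
  have "((\<lambda>s. exp (C * \<bar>s - t\<bar>) * N s \<zeta> + N t \<zeta> - 2 * N s \<zeta>) \<longlongrightarrow>
      exp (C * \<bar>t - t\<bar>) * N t \<zeta> + N t \<zeta> - 2 * N t \<zeta>) (at t within I)"
    by (intro tendsto_intros Ncont[OF t])
  thus "((\<lambda>s. exp (C * \<bar>s - t\<bar>) * N s \<zeta> + N t \<zeta> - 2 * N s \<zeta>) \<longlongrightarrow> 0) (at t within I)" by simp
qed

end



context bsetting begin

lemma gconv:
  assumes t: "t \<in> I"
  shows "((\<lambda>s. (exp (- \<phi> t w) - exp (- \<phi> s w)) / (s - t)) \<longlongrightarrow> \<phi>' t w * exp (- \<phi> t w)) (at t within I)"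
proof -
  have "((\<lambda>s. exp (- \<phi> s w)) has_real_derivative exp (- \<phi> t w) * (- \<phi>' t w)) (at t within I)"
    using der[OF t, of w] by (auto intro!: derivative_eq_intros)
  hence "((\<lambda>s. (exp (- \<phi> s w) - exp (- \<phi> t w)) / (s - t)) \<longlongrightarrow> exp (- \<phi> t w) * (- \<phi>' t w)) (at t within I)"
    by (simp add: has_field_derivative_iff)
  hence "((\<lambda>s. - ((exp (- \<phi> s w) - exp (- \<phi> t w)) / (s - t))) \<longlongrightarrow> - (exp (- \<phi> t w) * (- \<phi>' t w))) (at t within I)"
    by (rule tendsto_minus)
  moreover have "(\<lambda>s. - ((exp (- \<phi> s w) - exp (- \<phi> t w)) / (s - t))) = (\<lambda>s. (exp (- \<phi> t w) - exp (- \<phi> s w)) / (s - t))"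
    by (rule ext) (simp add: minus_divide_left)
  ultimately show ?thesis by (simp add: mult_ac)
qed

lemma gbound:
  assumes s: "s \<in> I" and t: "t \<in> I" and ne: "s \<noteq> t" and le: "\<bar>s - t\<bar> \<le> 1"
  shows "\<bar>(exp (- \<phi> t w) - exp (- \<phi> s w)) / (s - t)\<bar> \<le> C * exp C * exp (- \<phi> t w)"
proof -
  have C0': "C \<ge> 0" using C0[OF t] .
  have "\<bar>\<phi> t w - \<phi> s w\<bar> \<le> C * \<bar>s - t\<bar>" using lip[OF t s, of w] by (simp add: abs_minus_commute)
  hence "\<bar>exp (- \<phi> t w) - exp (- \<phi> s w)\<bar> \<le> C * \<bar>s - t\<bar> * exp (C * \<bar>s - t\<bar>) * exp (- \<phi> t w)"
    by (rule exp_diff_bound1)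
  also have "\<dots> \<le> C * \<bar>s - t\<bar> * exp C * exp (- \<phi> t w)"
  proof -
    have "C * \<bar>s - t\<bar> \<le> C * 1" using C0' le by (intro mult_left_mono) auto
    hence "exp (C * \<bar>s - t\<bar>) \<le> exp C" by simp
    thus ?thesis using C0' by (intro mult_right_mono mult_left_mono) auto
  qed
  finally have "\<bar>exp (- \<phi> t w) - exp (- \<phi> s w)\<bar> \<le> (C * exp C * exp (- \<phi> t w)) * \<bar>s - t\<bar>"
    by (simp add: mult_ac)
  thus ?thesis using ne by (simp add: abs_divide divide_le_eq)
qed

lemma phi'_meas:
  assumes t: "t \<in> I" and lp: "t islimpt I"
  shows "(\<lambda>w. \<phi>' t w) \<in> borel_measurable M"
proof -
  from lp obtain X where XI: "\<forall>n. X n \<in> I - {t}" and X: "X \<longlonglongrightarrow> t"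
    unfolding islimpt_sequential by blast
  have fX: "filterlim X (at t within I) sequentially"
    using XI X by (auto simp: filterlim_at eventually_sequentially)
  show ?thesis
  proof (rule borel_measurable_LIMSEQ_real[where u="\<lambda>n w. (\<phi> (X n) w - \<phi> t w) / (X n - t)"])
    fix w
    have "((\<lambda>s. (\<phi> s w - \<phi> t w) / (s - t)) \<longlongrightarrow> \<phi>' t w) (at t within I)"
      using der[OF t, of w] by (simp add: has_field_derivative_iff)
    thus "(\<lambda>n. (\<phi> (X n) w - \<phi> t w) / (X n - t)) \<longlonglongrightarrow> \<phi>' t w"
      by (rule filterlim_compose[OF _ fX])
  next
    fix n
    have "X n \<in> I" using XI by auto
    note [measurable] = phimeas[OF this] phimeas[OF t]
    show "(\<lambda>w. (\<phi> (X n) w - \<phi> t w) / (X n - t)) \<in> borel_measurable M" by measurable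
  qed
qed

lemma claim1_lp:
  assumes t: "t \<in> I" and lp: "t islimpt I"
  shows "((\<lambda>s. K s z \<zeta>) has_vector_derivative
            (\<integral> w. complex_of_real (\<phi>' t w) * K t z w * K t w \<zeta>
                   * complex_of_real (exp (- \<phi> t w)) \<partial>M)) (at t within I)"
proof -
  have C0': "C \<ge> 0" using C0[OF t] .
  note [measurable] = Kmeas1[OF t, of \<zeta>] Kmeas1[OF t, of z] Kmeas2[OF t, of z] emeas[OF t] phimeas[OF t]
  define e where "e = (\<lambda>w. exp (- \<phi> t w))"
  define g where "g = (\<lambda>s w. (exp (- \<phi> t w) - exp (- \<phi> s w)) / (s - t))"
  define T where "T = (\<integral> w. complex_of_real (\<phi>' t w) * K t z w * K t w \<zeta> * complex_of_real (exp (- \<phi> t w)) \<partial>M)"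
  define T' where "T' = (\<lambda>w. K t w \<zeta> * K t z w * complex_of_real (\<phi>' t w * exp (- \<phi> t w)))"
  define t1 where "t1 = (\<lambda>s w. (K s w \<zeta> - K t w \<zeta>) * K t z w * complex_of_real (g s w))"
  define t2 where "t2 = (\<lambda>s w. K t w \<zeta> * K t z w * complex_of_real (g s w - \<phi>' t w * exp (- \<phi> t w)))"
  define Q where "Q = (\<lambda>s. (K s z \<zeta> - K t z \<zeta>) / complex_of_real (s - t))"
  define B where "B = C * exp C"
  have B0: "B \<ge> 0" using C0' by (simp add: B_def)
  have phi'meas: "(\<lambda>w. \<phi>' t w) \<in> borel_measurable M" by (rule phi'_meas[OF t lp])
  note [measurable] = phi'meas
  have TT': "T = integral\<^sup>L M T'"
    unfolding T_def T'_def by (rule Bochner_Integration.integral_cong) (simp_all add: mult_ac)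
  have T'i: "integrable M T'" unfolding T'_def
    by (rule int_prod[where e="\<lambda>w. exp (- \<phi> t w)" and c=C])
       (use Kint[OF t t] Kint2[OF t t] C0' bnd[OF t] in \<open>auto simp: abs_mult intro!: mult_right_mono\<close>)
  have key: "norm (Q s - T) \<le> B * sqrt (E t s \<zeta>) * sqrt (N t z) + norm (integral\<^sup>L M (t2 s))"
    if s: "s \<in> I" and ne: "s \<noteq> t" and le: "\<bar>s - t\<bar> \<le> 1" for s
  proof -
    note [measurable] = Kmeas1[OF s, of \<zeta>] emeas[OF s] phimeas[OF s]
    have gm: "g s \<in> borel_measurable M" unfolding g_def by measurable
    note [measurable] = gm
    have gb: "\<bar>g s w\<bar> \<le> B * exp (- \<phi> t w)" for w
      unfolding g_def B_def by (rule gbound[OF s t ne le])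
    have Qi: "integrable M (\<lambda>w. K s w \<zeta> * K t z w * complex_of_real (g s w))"
      by (rule int_prod[where e="\<lambda>w. exp (- \<phi> t w)" and c=B]) (use Kint[OF s t] Kint2[OF t t] B0 gb in auto)
    have t1i: "integrable M (t1 s)" unfolding t1_def
      by (rule int_prod[where e="\<lambda>w. exp (- \<phi> t w)" and c=B]) (use Eint[OF s t t] Kint2[OF t t] B0 gb in auto)
    have t2i: "integrable M (t2 s)" unfolding t2_def
    proof (rule int_prod[where e="\<lambda>w. exp (- \<phi> t w)" and c="B + C"])
      fix w
      have "\<bar>g s w - \<phi>' t w * exp (- \<phi> t w)\<bar> \<le> \<bar>g s w\<bar> + \<bar>\<phi>' t w\<bar> * exp (- \<phi> t w)"
        using abs_triangle_ineq4[of "g s w" "\<phi>' t w * exp (- \<phi> t w)"] by (simp add: abs_mult)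
      also have "\<dots> \<le> B * exp (- \<phi> t w) + C * exp (- \<phi> t w)"
        using gb[of w] bnd[OF t, of w] by (intro add_mono mult_right_mono) auto
      finally show "\<bar>g s w - \<phi>' t w * exp (- \<phi> t w)\<bar> \<le> (B + C) * exp (- \<phi> t w)"
        by (simp add: algebra_simps)
    qed (use Kint[OF t t] Kint2[OF t t] B0 C0' in auto)
    have Qeq: "Q s = (\<integral> w. K s w \<zeta> * K t z w * complex_of_real (g s w) \<partial>M)"
    proof -
      have "Q s = (\<integral> w. K s w \<zeta> * K t z w * complex_of_real (exp (- \<phi> t w) - exp (- \<phi> s w)) \<partial>M) / complex_of_real (s - t)"
        unfolding Q_def using Ndiff[OF s t] by simp
      also have "\<dots> = (\<integral> w. K s w \<zeta> * K t z w * complex_of_real (exp (- \<phi> t w) - exp (- \<phi> s w)) / complex_of_real (s - t) \<partial>M)"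
        by (rule integral_divide_zero[symmetric])
      also have "\<dots> = (\<integral> w. K s w \<zeta> * K t z w * complex_of_real (g s w) \<partial>M)"
        by (rule Bochner_Integration.integral_cong) (simp_all add: g_def del: of_real_diff)
      finally show ?thesis .
    qed
    have "Q s - T = (\<integral> w. K s w \<zeta> * K t z w * complex_of_real (g s w) - T' w \<partial>M)"
      using Qeq TT' Bochner_Integration.integral_diff[OF Qi T'i] by simp
    also have "\<dots> = (\<integral> w. t1 s w + t2 s w \<partial>M)"
      by (rule Bochner_Integration.integral_cong) (simp_all add: t1_def t2_def T'_def algebra_simps)
    also have "\<dots> = integral\<^sup>L M (t1 s) + integral\<^sup>L M (t2 s)"
      by (rule Bochner_Integration.integral_add[OF t1i t2i])
    finally have QT: "Q s - T = integral\<^sup>L M (t1 s) + integral\<^sup>L M (t2 s)" .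
    define a where "a = (\<lambda>w. cmod (K s w \<zeta> - K t w \<zeta>) * sqrt (exp (- \<phi> t w)))"
    define b where "b = (\<lambda>w. cmod (K t w z) * sqrt (exp (- \<phi> t w)))"
    have [measurable]: "a \<in> borel_measurable M" "b \<in> borel_measurable M" unfolding a_def b_def by measurable
    have a2: "(\<lambda>w. a w ^ 2) = (\<lambda>w. (cmod (K s w \<zeta> - K t w \<zeta>))\<^sup>2 * exp (- \<phi> t w))"
      by (rule ext) (simp add: a_def power_mult_distrib)
    have b2: "(\<lambda>w. b w ^ 2) = (\<lambda>w. (cmod (K t w z))\<^sup>2 * exp (- \<phi> t w))"
      by (rule ext) (simp add: b_def power_mult_distrib)
    have ai: "integrable M (\<lambda>w. a w ^ 2)" unfolding a2 by (rule Eint[OF s t t])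
    have bi: "integrable M (\<lambda>w. b w ^ 2)" unfolding b2 by (rule Kint[OF t t])
    note CS = CS_integral[of a M b, OF _ _ ai bi]
    have pt: "norm (t1 s w) \<le> B * (a w * b w)" for w
    proof -
      have "norm (t1 s w) = cmod (K s w \<zeta> - K t w \<zeta>) * cmod (K t w z) * \<bar>g s w\<bar>"
        by (simp add: t1_def norm_mult Ksym[OF t, of z w])
      also have "\<dots> \<le> cmod (K s w \<zeta> - K t w \<zeta>) * cmod (K t w z) * (B * exp (- \<phi> t w))"
        using gb[of w] by (intro mult_left_mono) auto
      also have "\<dots> = B * (a w * b w)"
      proof -
        have "sqrt (exp (- \<phi> t w)) * sqrt (exp (- \<phi> t w)) = exp (- \<phi> t w)" by simp
        thus ?thesis by (simp add: a_def b_def mult_ac)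
      qed
      finally show ?thesis .
    qed
    have "norm (integral\<^sup>L M (t1 s)) \<le> (\<integral> w. norm (t1 s w) \<partial>M)" by (rule integral_norm_bound)
    also have "\<dots> \<le> (\<integral> w. B * (a w * b w) \<partial>M)"
      by (rule integral_mono) (use t1i CS(1) pt in auto)
    also have "\<dots> = B * (\<integral> w. a w * b w \<partial>M)" by simp
    also have "\<dots> \<le> B * (sqrt (\<integral> w. a w ^ 2 \<partial>M) * sqrt (\<integral> w. b w ^ 2 \<partial>M))"
      using CS(2) B0 by (intro mult_left_mono) auto
    also have "\<dots> = B * sqrt (E t s \<zeta>) * sqrt (N t z)"
      unfolding a2 b2 N_def E_def by simp
    finally have "norm (integral\<^sup>L M (t1 s)) \<le> B * sqrt (E t s \<zeta>) * sqrt (N t z)" .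
    thus ?thesis unfolding QT using norm_triangle_ineq[of "integral\<^sup>L M (t1 s)" "integral\<^sup>L M (t2 s)"]
      by linarith
  qed
  have t2conv: "((\<lambda>s. integral\<^sup>L M (t2 s)) \<longlongrightarrow> integral\<^sup>L M (\<lambda>w. 0)) (at t within I)"
  proof (rule dct_within[where w="\<lambda>w. (B + C) * norm (K t w \<zeta> * K t z w * complex_of_real (exp (- \<phi> t w)))"])
    have "integrable M (\<lambda>w. K t w \<zeta> * K t z w * complex_of_real (exp (- \<phi> t w)))"
      by (rule int_prod[where e="\<lambda>w. exp (- \<phi> t w)" and c=1]) (use Kint[OF t t] Kint2[OF t t] in auto)
    thus "integrable M (\<lambda>w. (B + C) * norm (K t w \<zeta> * K t z w * complex_of_real (exp (- \<phi> t w))))"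
      by auto
    show "(\<lambda>w. 0::complex) \<in> borel_measurable M" by simp
    show "eventually (\<lambda>s. t2 s \<in> borel_measurable M) (at t within I)"
      using ev_near[OF t]
    proof eventually_elim
      case (elim s)
      hence s: "s \<in> I" by auto
      note [measurable] = emeas[OF s] phimeas[OF s]
      show "t2 s \<in> borel_measurable M" unfolding t2_def g_def by measurable
    qed
    show "eventually (\<lambda>s. AE w in M. norm (t2 s w) \<le> (B + C) * norm (K t w \<zeta> * K t z w * complex_of_real (exp (- \<phi> t w)))) (at t within I)"
      using ev_near[OF t]
    proof eventually_elim
      case (elim s)
      hence s: "s \<in> I" and ne: "s \<noteq> t" and le: "\<bar>s - t\<bar> \<le> 1" by auto
      show ?case
      proof (rule AE_I2)
        fix w
        have gb: "\<bar>g s w\<bar> \<le> B * exp (- \<phi> t w)"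
          unfolding g_def B_def by (rule gbound[OF s t ne le])
        have h: "\<bar>g s w - \<phi>' t w * exp (- \<phi> t w)\<bar> \<le> (B + C) * exp (- \<phi> t w)"
        proof -
          have "\<bar>g s w - \<phi>' t w * exp (- \<phi> t w)\<bar> \<le> \<bar>g s w\<bar> + \<bar>\<phi>' t w\<bar> * exp (- \<phi> t w)"
            using abs_triangle_ineq4[of "g s w" "\<phi>' t w * exp (- \<phi> t w)"] by (simp add: abs_mult)
          also have "\<dots> \<le> B * exp (- \<phi> t w) + C * exp (- \<phi> t w)"
            using gb bnd[OF t, of w] by (intro add_mono mult_right_mono) auto
          finally show ?thesis by (simp add: algebra_simps)
        qed
        have "norm (t2 s w) = cmod (K t w \<zeta>) * cmod (K t z w) * \<bar>g s w - \<phi>' t w * exp (- \<phi> t w)\<bar>"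
          by (simp add: t2_def norm_mult del: of_real_diff)
        also have "\<dots> \<le> cmod (K t w \<zeta>) * cmod (K t z w) * ((B + C) * exp (- \<phi> t w))"
          using h by (intro mult_left_mono) auto
        also have "\<dots> = (B + C) * norm (K t w \<zeta> * K t z w * complex_of_real (exp (- \<phi> t w)))"
          by (simp add: norm_mult mult_ac)
        finally show "norm (t2 s w) \<le> (B + C) * norm (K t w \<zeta> * K t z w * complex_of_real (exp (- \<phi> t w)))" .
      qed
    qed
    show "AE w in M. ((\<lambda>s. t2 s w) \<longlongrightarrow> 0) (at t within I)"
    proof (rule AE_I2)
      fix w
      have "((\<lambda>s. g s w - \<phi>' t w * exp (- \<phi> t w)) \<longlongrightarrow> \<phi>' t w * exp (- \<phi> t w) - \<phi>' t w * exp (- \<phi> t w)) (at t within I)"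
        unfolding g_def by (intro tendsto_intros gconv[OF t])
      hence "((\<lambda>s. complex_of_real (g s w - \<phi>' t w * exp (- \<phi> t w))) \<longlongrightarrow> complex_of_real 0) (at t within I)"
        by (intro tendsto_of_real) simp
      hence "((\<lambda>s. K t w \<zeta> * K t z w * complex_of_real (g s w - \<phi>' t w * exp (- \<phi> t w))) \<longlongrightarrow> K t w \<zeta> * K t z w * complex_of_real 0) (at t within I)"
        by (intro tendsto_mult tendsto_const)
      thus "((\<lambda>s. t2 s w) \<longlongrightarrow> 0) (at t within I)" by (simp add: t2_def)
    qed
  qed
  have "((\<lambda>s. Q s - T) \<longlongrightarrow> 0) (at t within I)"
  proof (rule Lim_null_comparison)
    show "eventually (\<lambda>s. norm (Q s - T) \<le> B * sqrt (E t s \<zeta>) * sqrt (N t z) + norm (integral\<^sup>L M (t2 s))) (at t within I)"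
      using ev_near[OF t] by eventually_elim (use key in auto)
    have "((\<lambda>s. B * sqrt (E t s \<zeta>) * sqrt (N t z) + norm (integral\<^sup>L M (t2 s))) \<longlongrightarrow> B * sqrt 0 * sqrt (N t z) + norm (integral\<^sup>L M (\<lambda>w. 0::complex))) (at t within I)"
      by (intro tendsto_intros Econv[OF t] t2conv)
    thus "((\<lambda>s. B * sqrt (E t s \<zeta>) * sqrt (N t z) + norm (integral\<^sup>L M (t2 s))) \<longlongrightarrow> 0) (at t within I)"
      by simp
  qed
  hence "(Q \<longlongrightarrow> T) (at t within I)" by (rule LIM_zero_cancel)
  hence "((\<lambda>s. K s z \<zeta>) has_vector_derivative T) (at t within I)"
    unfolding Q_def by (rule vector_derivative_from_quotient)
  thus ?thesis by (simp add: T_def)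
qed

lemma claim1:
  assumes t: "t \<in> I"
  shows "((\<lambda>s. K s z \<zeta>) has_vector_derivative
            (\<integral> w. complex_of_real (\<phi>' t w) * K t z w * K t w \<zeta>
                   * complex_of_real (exp (- \<phi> t w)) \<partial>M)) (at t within I)"
proof (cases "t islimpt I")
  case True thus ?thesis by (rule claim1_lp[OF t])
next
  case False
  hence "at t within I = bot" using trivial_limit_within[of t I] by (simp add: trivial_limit_def)
  thus ?thesis by (simp add: has_vector_derivative_def has_derivative_def bounded_linear_scaleR_left)
qed

end


theorem proposition2p2:
  fixes C :: real
  shows "\<exists>A::real. \<forall>(M::'a measure) V (I::real set) (\<phi>::real \<Rightarrow> 'a \<Rightarrow> real) \<phi>' K.
     fun_space M V \<and> is_interval I
     \<and> (\<forall>t\<in>I. admissible_weight M V (\<phi> t))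
     \<and> (\<forall>t\<in>I. \<forall>x. ((\<lambda>s. \<phi> s x) has_real_derivative \<phi>' t x) (at t within I))
     \<and> (\<forall>t\<in>I. \<forall>x. \<bar>\<phi>' t x\<bar> \<le> C)
     \<and> (\<forall>t\<in>I. bergman_kernel M V (\<phi> t) (K t))
     \<longrightarrow>
       (\<forall>t\<in>I. \<forall>z \<zeta>. ((\<lambda>s. K s z \<zeta>) has_vector_derivative
            (\<integral> w. complex_of_real (\<phi>' t w) * K t z w * K t w \<zeta>
                   * complex_of_real (exp (- \<phi> t w)) \<partial>M)) (at t within I))
     \<and> (\<forall>t\<in>I. \<forall>\<tau>. t + \<tau> \<in> I \<longrightarrow> \<bar>\<tau>\<bar> \<le> 1 \<longrightarrow> (\<forall>z.
          cmod ((K (t + \<tau>) z z - K t z z) / complex_of_real \<tau>) \<le> A * cmod (K t z z)))"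
proof (rule exI[of _ "C * exp (C / 2) * (1 + C * exp (C / 2))"], intro allI impI)
  fix M :: "'a measure" and V I and \<phi> :: "real \<Rightarrow> 'a \<Rightarrow> real" and \<phi>' K
  assume H: "fun_space M V \<and> is_interval I
     \<and> (\<forall>t\<in>I. admissible_weight M V (\<phi> t))
     \<and> (\<forall>t\<in>I. \<forall>x. ((\<lambda>s. \<phi> s x) has_real_derivative \<phi>' t x) (at t within I))
     \<and> (\<forall>t\<in>I. \<forall>x. \<bar>\<phi>' t x\<bar> \<le> C)
     \<and> (\<forall>t\<in>I. bergman_kernel M V (\<phi> t) (K t))"
  interpret bsetting M V I \<phi> \<phi>' K C
    using H by unfold_locales blast+
  show "(\<forall>t\<in>I. \<forall>z \<zeta>. ((\<lambda>s. K s z \<zeta>) has_vector_derivative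
            (\<integral> w. complex_of_real (\<phi>' t w) * K t z w * K t w \<zeta>
                   * complex_of_real (exp (- \<phi> t w)) \<partial>M)) (at t within I))
     \<and> (\<forall>t\<in>I. \<forall>\<tau>. t + \<tau> \<in> I \<longrightarrow> \<bar>\<tau>\<bar> \<le> 1 \<longrightarrow> (\<forall>z.
          cmod ((K (t + \<tau>) z z - K t z z) / complex_of_real \<tau>) \<le> (C * exp (C / 2) * (1 + C * exp (C / 2))) * cmod (K t z z)))"
  proof (intro conjI ballI allI impI)
    fix t z \<zeta> assume "t \<in> I"
    thus "((\<lambda>s. K s z \<zeta>) has_vector_derivative
            (\<integral> w. complex_of_real (\<phi>' t w) * K t z w * K t w \<zeta>
                   * complex_of_real (exp (- \<phi> t w)) \<partial>M)) (at t within I)"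
      by (rule claim1)
  next
    fix t \<tau> z assume "t \<in> I" "t + \<tau> \<in> I" "\<bar>\<tau>\<bar> \<le> 1"
    thus "cmod ((K (t + \<tau>) z z - K t z z) / complex_of_real \<tau>) \<le> (C * exp (C / 2) * (1 + C * exp (C / 2))) * cmod (K t z z)"
      by (rule claim2)
  qed
qed

end
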